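(* Let $\mathcal{G}'$ and $\mathcal{G}''$ be two simple directed graphs on the same finite vertex set $\Pi$, each containing exactly one root component. Then there is a finite sequence of simple directed graphs $\mathcal{G}'=\mathcal{G}_0,\mathcal{G}_1,\dots,\mathcal{G}_k=\mathcal{G}''$ on $\Pi$, each containing exactly one root component, such that any two consecutive graphs differ in at most one edge. Moreover, if $\mathcal{G}'$ and $\mathcal{G}''$ have the same root component $\mathcal{R}$, the sequence can be chosen so that every $\mathcal{G}_i$ has root component $\mathcal{R}$.
   Context: A root component of a directed graph $\mathcal{G}$ is a strongly connected component $\mathcal{R}$ of $\mathcal{G}$ such that there is no edge $(q\to p)$ in $\mathcal{G}$ with $p\in\mathcal{R}$ and $q\notin\mathcal{R}$. *)

theory Defs
  imports Main
begin

text \<open>A simple directed graph on the vertex set V: an edge set E \<subseteq> V \<times> V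
  with no self-loops (no multi-edges is automatic for a set of pairs).\<close>
definition simple_digraph :: "'a set \<Rightarrow> ('a \<times> 'a) set \<Rightarrow> bool" where
  "simple_digraph V E \<longleftrightarrow> E \<subseteq> V \<times> V \<and> (\<forall>v. (v, v) \<notin> E)"

definition scc :: "'a set \<Rightarrow> ('a \<times> 'a) set \<Rightarrow> 'a set \<Rightarrow> bool" where
  "scc V E C \<longleftrightarrow> C \<noteq> {} \<and> C \<subseteq> V \<and>
     (\<forall>p\<in>C. \<forall>q\<in>C. (p, q) \<in> E\<^sup>* \<and> (q, p) \<in> E\<^sup>*) \<and>
     (\<forall>D. C \<subseteq> D \<and> D \<subseteq> V \<and> (\<forall>p\<in>D. \<forall>q\<in>D. (p, q) \<in> E\<^sup>* \<and> (q, p) \<in> E\<^sup>*) \<longrightarrow> D = C)"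

definition root_component :: "'a set \<Rightarrow> ('a \<times> 'a) set \<Rightarrow> 'a set \<Rightarrow> bool" where
  "root_component V E R \<longleftrightarrow> scc V E R \<and> (\<forall>q p. (q, p) \<in> E \<and> p \<in> R \<longrightarrow> q \<in> R)"

definition unique_root :: "'a set \<Rightarrow> ('a \<times> 'a) set \<Rightarrow> bool" where
  "unique_root V E \<longleftrightarrow> (\<exists>!R. root_component V E R)"

end

theory Submission imports Defs begin
lemma closed_rtrancl:
  assumes cl: "\<forall>q p. (q,p)\<in>E \<and> p\<in>S \<longrightarrow> q\<in>S"
  shows "(a,b)\<in>E\<^sup>* \<Longrightarrow> b\<in>S \<Longrightarrow> a\<in>S"
proof (induction rule: converse_rtrancl_induct)
  case base then show ?case .
next
  case (step y z) then show ?case using cl by blast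
qed

lemma rtrancl_in_V: "(q,p)\<in>E\<^sup>* \<Longrightarrow> p\<in>V \<Longrightarrow> E \<subseteq> V\<times>V \<Longrightarrow> q\<in>V"
  by (erule converse_rtranclE) auto

lemma exists_root:
  assumes fin: "finite V" and EV: "E \<subseteq> V\<times>V" and SV: "S \<subseteq> V" and ne: "S \<noteq> {}"
    and cl: "\<forall>q p. (q,p)\<in>E \<and> p\<in>S \<longrightarrow> q\<in>S"
  shows "\<exists>C. root_component V E C \<and> C \<subseteq> S"
proof -
  define anc where "anc p = {q. (q,p)\<in>E\<^sup>*}" for p
  have ancV: "anc p \<subseteq> V" if "p \<in> V" for p
    using rtrancl_in_V[OF _ that EV] unfolding anc_def by blast
  obtain s where s: "s \<in> S" using ne by blast
  obtain p where p: "p \<in> S" and pmin: "\<And>y. y \<in> S \<Longrightarrow> card (anc p) \<le> card (anc y)"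
    using ex_has_least_nat[of "\<lambda>x. x \<in> S" s "\<lambda>x. card (anc x)"] s by blast
  have pV: "p \<in> V" using p SV by blast
  have ancS: "anc p \<subseteq> S" unfolding anc_def using closed_rtrancl[OF cl] p by blast
  have hback: "(p,q)\<in>E\<^sup>*" if hq: "q \<in> anc p" for q
  proof -
    have qS: "q \<in> S" using hq ancS by blast
    have sub: "anc q \<subseteq> anc p" using hq unfolding anc_def by (auto intro: rtrancl_trans)
    have fp: "finite (anc p)" using ancV[OF pV] fin finite_subset by blast
    have "card (anc p) \<le> card (anc q)" using pmin qS .
    hence "anc q = anc p" by (rule card_seteq[OF fp sub])
    moreover have "p \<in> anc p" unfolding anc_def by simp
    ultimately show ?thesis unfolding anc_def by blast
  qed
  have pin: "p \<in> anc p" unfolding anc_def by simp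
  have sc: "\<forall>a\<in>anc p. \<forall>b\<in>anc p. (a,b)\<in>E\<^sup>* \<and> (b,a)\<in>E\<^sup>*"
  proof (intro ballI conjI)
    fix a b assume a: "a \<in> anc p" and b: "b \<in> anc p"
    show "(a,b)\<in>E\<^sup>*" using a hback[OF b] unfolding anc_def by (auto intro: rtrancl_trans)
    show "(b,a)\<in>E\<^sup>*" using b hback[OF a] unfolding anc_def by (auto intro: rtrancl_trans)
  qed
  have "scc V E (anc p)"
    unfolding scc_def
  proof (intro conjI allI impI)
    show "anc p \<noteq> {}" using pin by blast
    show "anc p \<subseteq> V" using ancV[OF pV] .
    show "\<forall>a\<in>anc p. \<forall>b\<in>anc p. (a,b)\<in>E\<^sup>* \<and> (b,a)\<in>E\<^sup>*" using sc .
    fix D assume D: "anc p \<subseteq> D \<and> D \<subseteq> V \<and> (\<forall>a\<in>D. \<forall>b\<in>D. (a, b) \<in> E\<^sup>* \<and> (b, a) \<in> E\<^sup>*)"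
    have "D \<subseteq> anc p"
    proof
      fix d assume "d \<in> D"
      with D pin have "(d,p) \<in> E\<^sup>*" by blast
      thus "d \<in> anc p" unfolding anc_def by simp
    qed
    thus "D = anc p" using D by blast
  qed
  moreover have "\<forall>q x. (q,x)\<in>E \<and> x\<in>anc p \<longrightarrow> q\<in>anc p"
    unfolding anc_def by (auto intro: converse_rtrancl_into_rtrancl)
  ultimately show ?thesis using ancS unfolding root_component_def by blast
qed

lemma scc_unique:
  assumes "scc V E C" "r \<in> C"
  shows "C = {q\<in>V. (q,r)\<in>E\<^sup>* \<and> (r,q)\<in>E\<^sup>*}"
proof -
  let ?M = "{q\<in>V. (q,r)\<in>E\<^sup>* \<and> (r,q)\<in>E\<^sup>*}"
  have CM: "C \<subseteq> ?M" using assms unfolding scc_def by blast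
  have "\<forall>a\<in>?M. \<forall>b\<in>?M. (a,b)\<in>E\<^sup>* \<and> (b,a)\<in>E\<^sup>*" by (auto intro: rtrancl_trans)
  hence "?M = C" using assms CM unfolding scc_def by blast
  thus ?thesis by simp
qed

lemma U1:
  assumes fin: "finite V" and EV: "E \<subseteq> V\<times>V" and r: "r \<in> V" and all: "\<forall>v\<in>V. (r,v)\<in>E\<^sup>*"
  shows "unique_root V E"
proof -
  have cl: "\<forall>q p. (q,p)\<in>E \<and> p\<in>V \<longrightarrow> q\<in>V" using EV by blast
  obtain C where C: "root_component V E C" using exists_root[OF fin EV subset_refl _ cl] r by blast
  have inr: "r \<in> R'" if R': "root_component V E R'" for R'
  proof -
    from R' have "R' \<noteq> {}" "R' \<subseteq> V" and cl': "\<forall>q p. (q,p)\<in>E \<and> p\<in>R' \<longrightarrow> q\<in>R'"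
      unfolding root_component_def scc_def by auto
    then obtain p where p1: "p \<in> R'" and p2: "p \<in> V" by blast
    have "(r,p) \<in> E\<^sup>*" using all p2 by blast
    thus ?thesis by (rule closed_rtrancl[OF cl' _ p1])
  qed
  have "R' = C" if h: "root_component V E R'" for R'
  proof -
    have s1: "scc V E R'" using h unfolding root_component_def by blast
    have s2: "scc V E C" using C unfolding root_component_def by blast
    show ?thesis using scc_unique[OF s1 inr[OF h]] scc_unique[OF s2 inr[OF C]] by (rule trans[OF _ sym])
  qed
  thus ?thesis unfolding unique_root_def using C by blast
qed

lemma U2:
  assumes fin: "finite V" and EV: "E \<subseteq> V\<times>V" and u: "unique_root V E"
    and R: "root_component V E R" and r: "r \<in> R" and v: "v \<in> V"
  shows "(r,v)\<in>E\<^sup>*"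
proof -
  let ?A = "{q. (q,v)\<in>E\<^sup>*}"
  have AV: "?A \<subseteq> V" using rtrancl_in_V[OF _ v EV] by blast
  have cl: "\<forall>q p. (q,p)\<in>E \<and> p\<in>?A \<longrightarrow> q\<in>?A" by (auto intro: converse_rtrancl_into_rtrancl)
  obtain C where C: "root_component V E C" "C \<subseteq> ?A" using exists_root[OF fin EV AV _ cl] by blast
  have "C = R" using u C(1) R unfolding unique_root_def by blast
  thus ?thesis using C(2) r by blast
qed

lemma root_of_sub:
  assumes R: "root_component V G R" and GH: "G \<subseteq> H"
    and cl: "\<forall>q p. (q,p)\<in>H \<and> p\<in>R \<longrightarrow> q\<in>R"
  shows "root_component V H R"
proof -
  have mono: "G\<^sup>* \<subseteq> H\<^sup>*" using GH rtrancl_mono by blast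
  from R have ne: "R \<noteq> {}" and RV: "R \<subseteq> V" and sc: "\<forall>p\<in>R. \<forall>q\<in>R. (p, q) \<in> G\<^sup>* \<and> (q, p) \<in> G\<^sup>*"
    unfolding root_component_def scc_def by auto
  then obtain r where r: "r \<in> R" by blast
  have "scc V H R" unfolding scc_def
  proof (intro conjI allI impI)
    show "R \<noteq> {}" "R \<subseteq> V" using ne RV by auto
    show "\<forall>p\<in>R. \<forall>q\<in>R. (p, q) \<in> H\<^sup>* \<and> (q, p) \<in> H\<^sup>*" using sc mono by blast
    fix D assume D: "R \<subseteq> D \<and> D \<subseteq> V \<and> (\<forall>p\<in>D. \<forall>q\<in>D. (p, q) \<in> H\<^sup>* \<and> (q, p) \<in> H\<^sup>*)"
    have "D \<subseteq> R"
    proof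
      fix d assume "d \<in> D"
      with D r have "(d,r) \<in> H\<^sup>*" by blast
      thus "d \<in> R" using closed_rtrancl[OF cl] r by blast
    qed
    thus "D = R" using D by blast
  qed
  thus ?thesis using cl unfolding root_component_def by blast
qed

abbreviation adj :: "'b set \<Rightarrow> 'b set \<Rightarrow> bool" where
  "adj X Y \<equiv> card ((X - Y) \<union> (Y - X)) \<le> 1"

lemma chain:
  "finite (B - A) \<Longrightarrow> A \<subseteq> B \<Longrightarrow> \<exists>k Gs. Gs 0 = A \<and> Gs k = B \<and>
     (\<forall>i\<le>k. A \<subseteq> Gs i \<and> Gs i \<subseteq> B) \<and> (\<forall>i<k. adj (Gs i) (Gs (Suc i)))"
proof (induction "card (B - A)" arbitrary: A)
  case 0
  hence "A = B" by auto
  thus ?case by (intro exI[of _ 0] exI[of _ "\<lambda>_. A"]) auto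
next
  case (Suc n)
  have "B - A \<noteq> {}" using Suc(2) by (metis card.empty nat.distinct(1))
  then obtain e where e: "e \<in> B - A" by blast
  let ?A = "insert e A"
  have eq: "B - ?A = (B - A) - {e}" by blast
  have c1: "card (B - A - {e}) = card (B - A) - 1" by (rule card_Diff_singleton[OF e])
  have c: "n = card (B - ?A)" unfolding eq using c1 Suc(2) by linarith
  have f: "finite (B - ?A)" using Suc(3) unfolding eq by blast
  have sb: "?A \<subseteq> B" using Suc(4) e by blast
  obtain k Gs where G: "Gs 0 = ?A" "Gs k = B" "\<forall>i\<le>k. ?A \<subseteq> Gs i \<and> Gs i \<subseteq> B"
     "\<forall>i<k. adj (Gs i) (Gs (Suc i))" using Suc(1)[OF c f sb] by blast
  define Hs where "Hs i = (if i = 0 then A else Gs (i - 1))" for i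
  have "Hs 0 = A" "Hs (Suc k) = B" unfolding Hs_def using G by auto
  moreover have "\<forall>i\<le>Suc k. A \<subseteq> Hs i \<and> Hs i \<subseteq> B"
  proof (intro allI impI)
    fix i assume "i \<le> Suc k"
    thus "A \<subseteq> Hs i \<and> Hs i \<subseteq> B" unfolding Hs_def using G(3) Suc(4) by (cases i) auto
  qed
  moreover have "\<forall>i<Suc k. adj (Hs i) (Hs (Suc i))"
  proof (intro allI impI)
    fix i assume i: "i < Suc k"
    show "adj (Hs i) (Hs (Suc i))"
    proof (cases i)
      case 0
      have "(A - ?A) \<union> (?A - A) = {e}" using e by auto
      thus ?thesis using 0 G(1) unfolding Hs_def by simp
    next
      case (Suc j)
      thus ?thesis using G(4) i unfolding Hs_def by simp
    qed
  qed
  ultimately show ?case by blast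
qed

lemma join:
  assumes G: "Gs 0 = A" "Gs k1 = K" "\<forall>i\<le>k1. P (Gs i)" "\<forall>i<k1. adj (Gs i) (Gs (Suc i))"
    and H: "Hs 0 = B" "Hs k2 = K" "\<forall>i\<le>k2. P (Hs i)" "\<forall>i<k2. adj (Hs i) (Hs (Suc i))"
  shows "\<exists>k Fs. Fs 0 = A \<and> Fs k = B \<and> (\<forall>i\<le>k. P (Fs i)) \<and> (\<forall>i<k. adj (Fs i) (Fs (Suc i)))"
proof -
  define Fs where "Fs i = (if i \<le> k1 then Gs i else Hs (k1 + k2 - i))" for i
  have "Fs 0 = A" unfolding Fs_def using G by simp
  moreover have "Fs (k1+k2) = B" unfolding Fs_def using G H by auto
  moreover have "\<forall>i\<le>k1+k2. P (Fs i)" unfolding Fs_def using G H by auto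
  moreover have "\<forall>i<k1+k2. adj (Fs i) (Fs (Suc i))"
  proof (intro allI impI)
    fix i assume i: "i < k1 + k2"
    show "adj (Fs i) (Fs (Suc i))"
    proof (cases "i < k1")
      case True thus ?thesis unfolding Fs_def using G(4) by simp
    next
      case False
      define j where "j = k1 + k2 - Suc i"
      have j: "j < k2" "Fs (Suc i) = Hs j" "Fs i = Hs (Suc j)"
        using False i G(2) H(2) unfolding j_def Fs_def by (auto simp: Suc_diff_Suc)
      have "adj (Hs j) (Hs (Suc j))" using H(4) j(1) by blast
      thus ?thesis using j by (simp add: Un_commute)
    qed
  qed
  ultimately show ?thesis by blast
qed

theorem lemma16:
  fixes \<Pi> :: "'a set" and G1 G2 :: "('a \<times> 'a) set"
  assumes "finite \<Pi>"
    and "simple_digraph \<Pi> G1" and "unique_root \<Pi> G1"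
    and "simple_digraph \<Pi> G2" and "unique_root \<Pi> G2"
  shows "(\<exists>k Gs. Gs 0 = G1 \<and> Gs k = G2 \<and>
            (\<forall>i\<le>k. simple_digraph \<Pi> (Gs i) \<and> unique_root \<Pi> (Gs i)) \<and>
            (\<forall>i<k. card ((Gs i - Gs (Suc i)) \<union> (Gs (Suc i) - Gs i)) \<le> 1))
      \<and> (\<forall>R. root_component \<Pi> G1 R \<and> root_component \<Pi> G2 R \<longrightarrow>
          (\<exists>k Gs. Gs 0 = G1 \<and> Gs k = G2 \<and>
            (\<forall>i\<le>k. simple_digraph \<Pi> (Gs i) \<and> unique_root \<Pi> (Gs i) \<and> root_component \<Pi> (Gs i) R) \<and>
            (\<forall>i<k. card ((Gs i - Gs (Suc i)) \<union> (Gs (Suc i) - Gs i)) \<le> 1)))"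
proof -
  note fin = assms(1)
  have E1: "G1 \<subseteq> \<Pi> \<times> \<Pi>" and E2: "G2 \<subseteq> \<Pi> \<times> \<Pi>" using assms unfolding simple_digraph_def by auto
  have finK: "finite (\<Pi> \<times> \<Pi>)" using fin by simp
  \<comment> \<open>reach-all from a root vertex is preserved by supersets\<close>
  have good: "unique_root \<Pi> H" if G: "G \<subseteq> H" "H \<subseteq> \<Pi> \<times> \<Pi>" "G \<subseteq> \<Pi> \<times> \<Pi>" "unique_root \<Pi> G" for G H
  proof -
    obtain R where R: "root_component \<Pi> G R" using ex1_implies_ex[OF G(4)[unfolded unique_root_def]] by blast
    have "R \<noteq> {}" "R \<subseteq> \<Pi>" using R unfolding root_component_def scc_def by auto
    then obtain r where r: "r \<in> R" "r \<in> \<Pi>" by blast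
    have "\<forall>v\<in>\<Pi>. (r,v) \<in> G\<^sup>*" using U2[OF fin G(3) G(4) R r(1)] by blast
    hence "\<forall>v\<in>\<Pi>. (r,v) \<in> H\<^sup>*" using rtrancl_mono[OF G(1)] by blast
    thus ?thesis using U1[OF fin G(2) r(2)] by blast
  qed
  have part1: "\<exists>k Gs. Gs 0 = G1 \<and> Gs k = G2 \<and>
            (\<forall>i\<le>k. simple_digraph \<Pi> (Gs i) \<and> unique_root \<Pi> (Gs i)) \<and>
            (\<forall>i<k. adj (Gs i) (Gs (Suc i)))"
  proof -
    define K where "K = {(u,v). u \<in> \<Pi> \<and> v \<in> \<Pi> \<and> u \<noteq> v}"
    have KV: "K \<subseteq> \<Pi> \<times> \<Pi>" unfolding K_def by auto
    have finK': "finite (K - X)" for X using finite_subset[OF _ finK] KV by blast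
    have s1: "G1 \<subseteq> K" "G2 \<subseteq> K" using assms(2,4) unfolding simple_digraph_def K_def by auto
    have simpK: "simple_digraph \<Pi> H" if "H \<subseteq> K" for H using that unfolding K_def simple_digraph_def by auto
    define P where "P H = (simple_digraph \<Pi> H \<and> unique_root \<Pi> H)" for H
    obtain k1 Gs where A: "Gs 0 = G1" "Gs k1 = K" "\<forall>i\<le>k1. G1 \<subseteq> Gs i \<and> Gs i \<subseteq> K"
        "\<forall>i<k1. adj (Gs i) (Gs (Suc i))" using chain[OF finK' s1(1)] by blast
    obtain k2 Hs where B: "Hs 0 = G2" "Hs k2 = K" "\<forall>i\<le>k2. G2 \<subseteq> Hs i \<and> Hs i \<subseteq> K"
        "\<forall>i<k2. adj (Hs i) (Hs (Suc i))" using chain[OF finK' s1(2)] by blast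
    have "\<forall>i\<le>k1. P (Gs i)"
    proof (intro allI impI)
      fix i assume "i \<le> k1"
      hence h: "G1 \<subseteq> Gs i" "Gs i \<subseteq> K" using A(3) by auto
      show "P (Gs i)" unfolding P_def using simpK[OF h(2)] good[OF h(1) subset_trans[OF h(2) KV] E1 assms(3)] by blast
    qed
    moreover
    have "\<forall>i\<le>k2. P (Hs i)"
    proof (intro allI impI)
      fix i assume "i \<le> k2"
      hence h: "G2 \<subseteq> Hs i" "Hs i \<subseteq> K" using B(3) by auto
      show "P (Hs i)" unfolding P_def using simpK[OF h(2)] good[OF h(1) subset_trans[OF h(2) KV] E2 assms(5)] by blast
    qed
    ultimately show ?thesis using join[OF A(1,2) _ A(4) B(1,2) _ B(4), of P] unfolding P_def by blast
  qed
  have part2: "\<exists>k Gs. Gs 0 = G1 \<and> Gs k = G2 \<and>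
            (\<forall>i\<le>k. simple_digraph \<Pi> (Gs i) \<and> unique_root \<Pi> (Gs i) \<and> root_component \<Pi> (Gs i) R) \<and>
            (\<forall>i<k. adj (Gs i) (Gs (Suc i)))"
    if R1: "root_component \<Pi> G1 R" and R2: "root_component \<Pi> G2 R" for R
  proof -
    define K where "K = {(u,v). u \<in> \<Pi> \<and> v \<in> \<Pi> \<and> u \<noteq> v \<and> (v \<in> R \<longrightarrow> u \<in> R)}"
    have KV: "K \<subseteq> \<Pi> \<times> \<Pi>" unfolding K_def by auto
    have finK': "finite (K - X)" for X using finite_subset[OF _ finK] KV by blast
    have sK: "G \<subseteq> K" if sg: "simple_digraph \<Pi> G" and rg: "root_component \<Pi> G R" for G
    proof
      fix x assume x: "x \<in> G"
      obtain u v where uv: "x = (u,v)" by (cases x)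
      have c: "\<forall>q p. (q,p)\<in>G \<and> p\<in>R \<longrightarrow> q\<in>R" using rg unfolding root_component_def by blast
      have "u \<in> \<Pi>" "v \<in> \<Pi>" "u \<noteq> v" using sg x uv unfolding simple_digraph_def by auto
      moreover have "v \<in> R \<longrightarrow> u \<in> R" using c x uv by blast
      ultimately show "x \<in> K" unfolding K_def uv by simp
    qed
    have s1: "G1 \<subseteq> K" "G2 \<subseteq> K" using sK[OF assms(2) R1] sK[OF assms(4) R2] by auto
    have simpK: "simple_digraph \<Pi> H" if "H \<subseteq> K" for H using that unfolding K_def simple_digraph_def by auto
    have clK: "\<forall>q p. (q,p)\<in>H \<and> p\<in>R \<longrightarrow> q\<in>R" if "H \<subseteq> K" for H using that unfolding K_def by auto
    define P where "P H = (simple_digraph \<Pi> H \<and> unique_root \<Pi> H \<and> root_component \<Pi> H R)" for H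
    obtain k1 Gs where A: "Gs 0 = G1" "Gs k1 = K" "\<forall>i\<le>k1. G1 \<subseteq> Gs i \<and> Gs i \<subseteq> K"
        "\<forall>i<k1. adj (Gs i) (Gs (Suc i))" using chain[OF finK' s1(1)] by blast
    obtain k2 Hs where B: "Hs 0 = G2" "Hs k2 = K" "\<forall>i\<le>k2. G2 \<subseteq> Hs i \<and> Hs i \<subseteq> K"
        "\<forall>i<k2. adj (Hs i) (Hs (Suc i))" using chain[OF finK' s1(2)] by blast
    have "\<forall>i\<le>k1. P (Gs i)"
    proof (intro allI impI)
      fix i assume "i \<le> k1"
      hence h: "G1 \<subseteq> Gs i" "Gs i \<subseteq> K" using A(3) by auto
      show "P (Gs i)" unfolding P_def using simpK[OF h(2)] good[OF h(1) subset_trans[OF h(2) KV] E1 assms(3)] root_of_sub[OF R1 h(1) clK[OF h(2)]] by blast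
    qed
    moreover
    have "\<forall>i\<le>k2. P (Hs i)"
    proof (intro allI impI)
      fix i assume "i \<le> k2"
      hence h: "G2 \<subseteq> Hs i" "Hs i \<subseteq> K" using B(3) by auto
      show "P (Hs i)" unfolding P_def using simpK[OF h(2)] good[OF h(1) subset_trans[OF h(2) KV] E2 assms(5)] root_of_sub[OF R2 h(1) clK[OF h(2)]] by blast
    qed
    ultimately show ?thesis using join[OF A(1,2) _ A(4) B(1,2) _ B(4), of P] unfolding P_def by blast
  qed
  show ?thesis using part1 part2 by blast
qed

end
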